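(* Let $1\le q<p<\infty$, and define $\mathcal I_{\mathscr S}(t)=\Lambda_p^*(t_1,t_2)-\log t_3$ for $t=(t_1,t_2,t_3)$ with $t_1,t_2\in\mathbb R$, $t_3\in(0,1]$. Let $z>m_{p,q}$ with $z^*=(z^q,1)\in\mathcal J_p$ and set $z^{**}=(z^q,1,1)$. Then $$\inf_{\substack{z_1>0,\ z_2\in(0,1]\\ z_1z_2=z}}\Big[\inf_{\substack{t_1,t_2>0\\ t_1^{1/q}t_2^{-1/p}=z_1}}\Lambda_p^*(t_1,t_2)-\log z_2\Big]=\inf\{\mathcal I_{\mathscr S}(t):t_1,t_2>0,\ t_3\in(0,1],\ t_1^{1/q}t_2^{-1/p}t_3=z\}=\mathcal I_{\mathscr S}(z^{**})=\Lambda_p^*(z^* ),$$ and $z^{**}$ is the unique point of $\{t:t_1,t_2>0,\ t_3\in(0,1],\ t_1^{1/q}t_2^{-1/p}t_3=z\}$ at which the infimum of $\mathcal I_{\mathscr S}$ is attained.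
   Context: Let $f_p(x)=\frac{1}{2p^{1/p}\Gamma(1+1/p)}e^{-|x|^p/p}$, $m_{p,q}=(\int_{\mathbb R}|x|^qf_p(x)dx)^{1/q}$. For $\tau\in\mathbb R^2$, $\Lambda_p(\tau)=\log\int_{\mathbb R}e^{\tau_1|y|^q+\tau_2|y|^p}f_p(y)\,dy$, finite exactly on $\mathcal D_p=\mathbb R\times(-\infty,1/p)$; $\Lambda_p^*(x)=\sup_{\tau\in\mathbb R^2}(\langle x,\tau\rangle-\Lambda_p(\tau))$. $\mathcal J_p$ is the set of $x\in\mathbb R^2$ for which there exists (a unique) $\tau(x)\in\mathcal D_p$ with $\nabla_\tau\Lambda_p(\tau(x))=x$. *)

theory Defs
  imports "HOL-Analysis.Analysis"
begin

definition fp :: "real \<Rightarrow> real \<Rightarrow> real" where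
  "fp p x = 1 / (2 * p powr (1/p) * Gamma (1 + 1/p)) * exp (- (\<bar>x\<bar> powr p) / p)"

definition mpq :: "real \<Rightarrow> real \<Rightarrow> real" where
  "mpq p q = (LINT x|lborel. \<bar>x\<bar> powr q * fp p x) powr (1/q)"

text \<open>Domain D_p where Lambda_p is finite.\<close>
definition Dp :: "real \<Rightarrow> (real \<times> real) set" where
  "Dp p = {\<tau>. snd \<tau> < 1/p}"

text \<open>Log-moment generating function Lambda_p (meaningful on D_p).\<close>
definition Lambda :: "real \<Rightarrow> real \<Rightarrow> real \<times> real \<Rightarrow> real" where
  "Lambda p q \<tau> = ln (LINT y|lborel. exp (fst \<tau> * \<bar>y\<bar> powr q + snd \<tau> * \<bar>y\<bar> powr p) * fp p y)"

text \<open>Legendre transform; Lambda_p = +infinity outside D_p, so the sup ranges over D_p.\<close>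
definition Lambda_star :: "real \<Rightarrow> real \<Rightarrow> real \<times> real \<Rightarrow> ereal" where
  "Lambda_star p q x = (SUP \<tau>\<in>Dp p. ereal (fst x * fst \<tau> + snd x * snd \<tau> - Lambda p q \<tau>))"

definition Jp :: "real \<Rightarrow> real \<Rightarrow> (real \<times> real) set" where
  "Jp p q = {x. \<exists>\<tau>\<in>Dp p. (Lambda p q has_derivative (\<lambda>h. fst x * fst h + snd x * snd h)) (at \<tau>)}"

definition IS :: "real \<Rightarrow> real \<Rightarrow> real \<times> real \<times> real \<Rightarrow> ereal" where
  "IS p q t = Lambda_star p q (fst t, fst (snd t)) - ereal (ln (snd (snd t)))"

end

theory Submission
  imports Defs "HOL-Real_Asymp.Real_Asymp"
begin


lemma gamma_half_line:
  fixes s :: real assumes s: "s > 0"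
  shows "set_integrable lborel {0<..} (\<lambda>t. t powr (s - 1) / exp t)"
    and "(LINT t:{0<..}|lborel. t powr (s - 1) / exp t) = Gamma s"
proof -
  have hi: "((\<lambda>t. t powr (s - 1) / exp t) has_integral Gamma s) {0<..}"
  proof -
    have "((\<lambda>t. t powr (s - 1) / exp t) has_integral Gamma s) {0..}"
      by (rule Gamma_integral_real[OF s])
    moreover have "((\<lambda>t. t powr (s - 1) / exp t) has_integral Gamma s) {0..} \<longleftrightarrow>
                   ((\<lambda>t. t powr (s - 1) / exp t) has_integral Gamma s) {0<..}"
      by (rule has_integral_spike_set_eq; rule negligible_subset[of "{0}"]) auto
    ultimately show ?thesis by simp
  qed
  have nn: "(\<integral>\<^sup>+x. ennreal (indicator {0<..} x * (x powr (s - 1) / exp x)) \<partial>lborel) = ennreal (Gamma s)"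
    using nn_integral_has_integral_lebesgue[OF _ hi] by simp
  have hb: "has_bochner_integral lborel (\<lambda>x. indicator {0<..} x * (x powr (s - 1) / exp x)) (Gamma s)"
    by (rule has_bochner_integral_nn_integral) (use nn s in \<open>auto intro: Gamma_real_pos less_imp_le\<close>)
  show "set_integrable lborel {0<..} (\<lambda>t. t powr (s - 1) / exp t)"
    using hb unfolding set_integrable_def has_bochner_integral_iff by simp
  show "(LINT t:{0<..}|lborel. t powr (s - 1) / exp t) = Gamma s"
    using hb unfolding set_lebesgue_integral_def has_bochner_integral_iff by simp
qed

lemma half_line_p:
  fixes p :: real assumes p: "p > 0"
  shows "set_integrable lborel {0<..} (\<lambda>x. exp (- (x powr p) / p))"
    and "(LINT x:{0<..}|lborel. exp (- (x powr p) / p)) = p powr (1/p - 1) * Gamma (1/p)"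
proof -
  define g where "g = (\<lambda>t::real. (p*t) powr (1/p))"
  define g' where "g' = (\<lambda>t::real. (p*t) powr (1/p - 1))"
  define f where "f = (\<lambda>x::real. exp (- (x powr p) / p))"
  have fg: "f (g t) * g' t = p powr (1/p - 1) * (t powr (1/p - 1) / exp t)" if "t > 0" for t
  proof -
    have "g t powr p = p * t" unfolding g_def using p that by (simp add: powr_powr)
    then show ?thesis unfolding f_def g'_def using p that by (simp add: powr_mult exp_minus field_simps)
  qed
  have int1: "set_integrable lborel (einterval 0 \<infinity>) (\<lambda>t. f (g t) * g' t)"
  proof -
    have "set_integrable lborel {0<..} (\<lambda>t. p powr (1/p - 1) * (t powr (1/p - 1) / exp t))"
      by (rule set_integrable_mult_right, rule gamma_half_line(1)) (use p in simp)
    moreover have E: "einterval 0 \<infinity> = {0::real<..}" by (simp add: zero_ereal_def)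
    ultimately show ?thesis unfolding E
      by (subst set_integrable_cong[OF refl refl fg]) auto
  qed
  have deriv: "DERIV g x :> g' x" if "0 < x" for x
  proof -
    have "DERIV g x :> (1/p) * (p*x) powr (1/p - 1) * p"
      unfolding g_def using p that by (auto intro!: derivative_eq_intros)
    then show ?thesis unfolding g'_def using p by simp
  qed
  have h1: "(0::ereal) < \<infinity>" by simp
  have h2: "DERIV g x :> g' x" if "0 < ereal x" "ereal x < \<infinity>" for x
      using that deriv by (simp add: zero_ereal_def)
  have h3: "isCont f (g x)" if "0 < ereal x" "ereal x < \<infinity>" for x
      using that p unfolding f_def g_def by (auto simp: zero_ereal_def intro!: continuous_intros)
  have h4: "isCont g' x" if "0 < ereal x" "ereal x < \<infinity>" for x
      using that p unfolding g'_def by (auto simp: zero_ereal_def intro!: continuous_intros)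
  have h5: "0 \<le> f (g x)" if "0 < ereal x" "ereal x < \<infinity>" for x unfolding f_def by simp
  have h6: "0 \<le> g' x" if "0 \<le> ereal x" "ereal x \<le> \<infinity>" for x
      unfolding g'_def by simp
  have h7: "((ereal \<circ> g \<circ> real_of_ereal) \<longlongrightarrow> 0) (at_right 0)"
      unfolding zero_ereal_def ereal_tendsto_simps g_def using p by real_asymp
  have h8: "((ereal \<circ> g \<circ> real_of_ereal) \<longlongrightarrow> \<infinity>) (at_left \<infinity>)"
      unfolding ereal_tendsto_simps g_def using p by real_asymp
  note sub = interval_integral_substitution_nonneg[OF h1 h2 h3 h4 h5 h6 h7 h8 int1]
  show "set_integrable lborel {0<..} (\<lambda>x. exp (- (x powr p) / p))"
    using sub(1) unfolding f_def by (simp add: zero_ereal_def)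
  have "(LINT x:{0<..}|lborel. exp (- (x powr p) / p)) = (LBINT x=0..\<infinity>. (f (g x) * g' x))"
    using sub(2) unfolding f_def by (simp add: zero_ereal_def interval_integral_to_infinity_eq)
  also have "\<dots> = (LINT x:{0<..}|lborel. p powr (1/p - 1) * (x powr (1/p - 1) / exp x))"
    by (simp add: zero_ereal_def interval_integral_to_infinity_eq set_lebesgue_integral_cong fg)
  also have "\<dots> = p powr (1/p-1) * (LINT x:{0<..}|lborel. x powr (1/p - 1) / exp x)"
    by (rule set_integral_mult_right)
  also have "\<dots> = p powr (1/p - 1) * Gamma (1/p)"
    using gamma_half_line(2)[of "1/p"] p by simp
  finally show "(LINT x:{0<..}|lborel. exp (- (x powr p) / p)) = p powr (1/p - 1) * Gamma (1/p)" .
qed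

lemma even_integral:
  fixes F :: "real \<Rightarrow> real"
  assumes I: "set_integrable lborel {0<..} F" and M[measurable]: "F \<in> borel_measurable borel"
  shows "integrable lborel (\<lambda>x. F \<bar>x\<bar>)" "(LINT x|lborel. F \<bar>x\<bar>) = 2 * (LINT x:{0<..}|lborel. F x)"
proof -
  define G where "G = (\<lambda>x. indicator {0<..} x * F x)"
  have GI: "integrable lborel G" using I unfolding G_def set_integrable_def by simp
  have GI2: "integrable lborel (\<lambda>x. G (0 + (-1) * x))"
    by (rule lborel_integrable_real_affine[OF GI]) simp
  have GE: "(LINT x|lborel. G x) = (LINT x|lborel. G (0 + (-1) * x))"
    using lborel_integral_real_affine[of "-1" G 0] by simp
  have AE: "AE x in lborel. F \<bar>x\<bar> = G x + G (0 + (-1) * x)"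
    by (rule eventually_mono[OF AE_lborel_singleton[of 0]]) (auto simp: G_def indicator_def)
  have GM: "G \<in> borel_measurable borel" unfolding G_def by measurable
  have "integrable lborel (\<lambda>x. G x + G (0 + (-1) * x))" using GI GI2 by simp
  then show "integrable lborel (\<lambda>x. F \<bar>x\<bar>)"
    by (subst integrable_cong_AE[OF _ _ AE]) (use GM in \<open>auto\<close>)
  have "(LINT x|lborel. F \<bar>x\<bar>) = (LINT x|lborel. G x + G (0 + (-1) * x))"
    by (rule integral_cong_AE) (use AE GM in \<open>auto\<close>)
  also have "\<dots> = 2 * (LINT x|lborel. G x)" using GI GI2 GE by simp
  finally show "(LINT x|lborel. F \<bar>x\<bar>) = 2 * (LINT x:{0<..}|lborel. F x)"
    unfolding G_def set_lebesgue_integral_def by simp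
qed

lemma fp_normalized:
  fixes p :: real assumes p: "p > 0"
  shows "integrable lborel (fp p)" "(LINT x|lborel. fp p x) = 1"
proof -
  define F where "F = (\<lambda>x::real. exp (- (x powr p) / p))"
  have FM: "F \<in> borel_measurable borel" unfolding F_def by measurable
  note E = even_integral[OF half_line_p(1)[OF p, folded F_def] FM]
  define K where "K = 1 / (2 * p powr (1/p) * Gamma (1 + 1/p))"
  have fpK: "fp p = (\<lambda>x. K * F \<bar>x\<bar>)" unfolding fp_def K_def F_def by auto
  show "integrable lborel (fp p)" unfolding fpK using E(1) by simp
  have G: "Gamma (1 + 1/p) = (1/p) * Gamma (1/p)" proof -
    have "1/p \<notin> \<int>\<^sub>\<le>\<^sub>0" using p by (auto dest: nonpos_Ints_nonpos)
    then show ?thesis using Gamma_plus1[of "1/p"] by (simp add: add.commute)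
  qed
  have pp: "p powr (1/p - 1) = p powr (1/p) / p" using p by (simp add: powr_diff)
  have g0: "Gamma (1/p) \<noteq> 0" using p by (intro less_imp_neq[symmetric] Gamma_real_pos) simp
  have "(LINT x|lborel. fp p x) = K * (2 * (p powr (1/p - 1) * Gamma (1/p)))"
    unfolding fpK using E(2) half_line_p(2)[OF p] unfolding F_def by simp
  also have "\<dots> = 1" unfolding K_def G pp using p g0 by (simp add: field_simps)
  finally show "(LINT x|lborel. fp p x) = 1" .
qed



definition gI :: "real \<Rightarrow> real \<Rightarrow> real \<times> real \<Rightarrow> real \<Rightarrow> real" where
  "gI p q \<sigma> y = exp (fst \<sigma> * \<bar>y\<bar> powr q + snd \<sigma> * \<bar>y\<bar> powr p) * fp p y"

definition KK :: "real \<Rightarrow> real" where "KK p = 1 / (2 * p powr (1/p) * Gamma (1 + 1/p))"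

lemma KK_pos: "p > 0 \<Longrightarrow> KK p > 0"
proof -
  assume p: "p > 0"
  have "1/p > 0" using p by simp
  then have "Gamma (1 + 1/p) > 0" by (intro Gamma_real_pos) linarith
  then show ?thesis unfolding KK_def using p by simp
qed

lemma gI_eq: "gI p q \<sigma> y = KK p * exp (fst \<sigma> * \<bar>y\<bar> powr q + (snd \<sigma> - 1/p) * \<bar>y\<bar> powr p)"
  unfolding gI_def fp_def KK_def by (simp add: exp_add[symmetric] algebra_simps diff_divide_distrib)

lemma Lambda_gI: "Lambda p q \<sigma> = ln (LINT y|lborel. gI p q \<sigma> y)"
  unfolding Lambda_def gI_def ..

lemma gI_meas[measurable]: "gI p q \<sigma> \<in> borel_measurable borel"
  unfolding gI_eq by measurable

lemma gI_pos: "p > 0 \<Longrightarrow> gI p q \<sigma> y > 0"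
  unfolding gI_eq using KK_pos by simp

lemma poly_bound:
  fixes a e p q :: real
  assumes e: "e > 0" and q: "0 < q" "q < p"
  shows "\<exists>C. \<forall>t\<ge>0. a * t powr q - e * t powr p \<le> C"
proof -
  define T where "T = max 1 ((\<bar>a\<bar>/e) powr (1/(p-q)))"
  have T1: "T \<ge> 1" unfolding T_def by simp
  have TT: "T powr (p - q) \<ge> \<bar>a\<bar>/e"
  proof -
    have "(\<bar>a\<bar>/e) powr (1/(p-q)) \<le> T" unfolding T_def by simp
    then have "((\<bar>a\<bar>/e) powr (1/(p-q))) powr (p-q) \<le> T powr (p-q)"
      using q by (intro powr_mono2) auto
    moreover have "((\<bar>a\<bar>/e) powr (1/(p-q))) powr (p-q) = \<bar>a\<bar>/e"
      using q e by (simp add: powr_powr)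
    ultimately show ?thesis by simp
  qed
  show ?thesis
  proof (intro exI allI impI)
    fix t :: real assume t: "t \<ge> 0"
    show "a * t powr q - e * t powr p \<le> \<bar>a\<bar> * T powr q"
    proof (cases "t \<le> T")
      case True
      have "a * t powr q \<le> \<bar>a\<bar> * t powr q" by (simp add: mult_right_mono)
      also have "\<dots> \<le> \<bar>a\<bar> * T powr q" using True t q by (intro mult_left_mono powr_mono2) auto
      moreover have "e * t powr p \<ge> 0" using e by simp
      ultimately show ?thesis by linarith
    next
      case False
      then have tp: "t > 0" "t \<ge> 1" using T1 by auto
      have "t powr (p - q) \<ge> T powr (p - q)" using False T1 q by (intro powr_mono2) auto
      then have "t powr (p-q) \<ge> \<bar>a\<bar>/e" using TT by simp
      then have "e * t powr (p-q) \<ge> \<bar>a\<bar>" using e by (simp add: field_simps)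
      then have "e * t powr (p-q) * t powr q \<ge> \<bar>a\<bar> * t powr q" by (intro mult_right_mono) auto
      moreover have "t powr (p-q) * t powr q = t powr p" using tp by (simp add: powr_add[symmetric])
      ultimately have "e * t powr p \<ge> \<bar>a\<bar> * t powr q" by (simp add: mult.assoc)
      moreover have "a * t powr q \<le> \<bar>a\<bar> * t powr q" by (simp add: mult_right_mono)
      moreover have "\<bar>a\<bar> * T powr q \<ge> 0" by simp
      ultimately show ?thesis by linarith
    qed
  qed
qed

lemma gI_integrable:
  assumes q: "0 < q" "q < p" and s: "snd \<sigma> < 1/p"
  shows "integrable lborel (gI p q \<sigma>)"
proof -
  have p: "p > 0" using q by simp
  define c where "c = 1/p - snd \<sigma>"
  have c: "c > 0" using s unfolding c_def by simp
  obtain C where C: "\<And>t. t \<ge> 0 \<Longrightarrow> fst \<sigma> * t powr q - (c/2) * t powr p \<le> C"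
    using poly_bound[of "c/2" q p "fst \<sigma>"] c q by auto
  define d where "d = (p * (c/2)) powr (1/p)"
  have dpos: "d > 0" unfolding d_def using p c by simp
  have dp: "d powr p = p * (c/2)" unfolding d_def using p c by (simp add: powr_powr)
  have fI: "integrable lborel (\<lambda>x. fp p (0 + d * x))"
    by (rule lborel_integrable_real_affine[OF fp_normalized(1)[OF p]]) (use dpos in simp)
  have fpd: "fp p (0 + d * x) = KK p * exp (- (c/2) * \<bar>x\<bar> powr p)" for x
  proof -
    have "\<bar>d * x\<bar> powr p = p * (c/2) * \<bar>x\<bar> powr p"
      using dpos dp by (simp add: abs_mult powr_mult)
    then show ?thesis unfolding fp_def KK_def using p by simp
  qed
  have fI2: "integrable lborel (\<lambda>x. exp C * fp p (0 + d * x))" using fI by simp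
  have AE: "AE x in lborel. norm (gI p q \<sigma> x) \<le> norm (exp C * fp p (0 + d * x))"
    proof (intro AE_I2)
      fix x :: real
      have "fst \<sigma> * \<bar>x\<bar> powr q + (snd \<sigma> - 1/p) * \<bar>x\<bar> powr p = 
            (fst \<sigma> * \<bar>x\<bar> powr q - (c/2) * \<bar>x\<bar> powr p) + (- (c/2) * \<bar>x\<bar> powr p)"
        unfolding c_def by (simp add: algebra_simps)
      also have "\<dots> \<le> C + (- (c/2) * \<bar>x\<bar> powr p)" using C[of "\<bar>x\<bar>"] by simp
      finally have "exp (fst \<sigma> * \<bar>x\<bar> powr q + (snd \<sigma> - 1/p) * \<bar>x\<bar> powr p) \<le> exp C * exp (- (c/2) * \<bar>x\<bar> powr p)"
        by (simp add: exp_add[symmetric])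
      then have "KK p * exp (fst \<sigma> * \<bar>x\<bar> powr q + (snd \<sigma> - 1/p) * \<bar>x\<bar> powr p) \<le> exp C * (KK p * exp (- (c/2) * \<bar>x\<bar> powr p))"
        using KK_pos[OF p] by (simp add: mult_left_mono mult.left_commute)
      then show "norm (gI p q \<sigma> x) \<le> norm (exp C * fp p (0 + d * x))"
        unfolding gI_eq fpd using KK_pos[OF p] by simp
    qed
  have M: "gI p q \<sigma> \<in> borel_measurable lborel" by simp
  show ?thesis by (rule Bochner_Integration.integrable_bound[OF fI2 M AE])
qed

lemma gI_integral_pos:
  assumes q: "0 < q" "q < p" and s: "snd \<sigma> < 1/p"
  shows "(LINT y|lborel. gI p q \<sigma> y) > 0"
proof -
  have p: "p > 0" using q by simp
  note I = gI_integrable[OF q s]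
  have nn: "\<And>y. 0 \<le> gI p q \<sigma> y" using gI_pos[OF p] less_imp_le by blast
  have ge: "(LINT y|lborel. gI p q \<sigma> y) \<ge> 0" using nn by (intro integral_nonneg_AE) simp
  have "(LINT y|lborel. gI p q \<sigma> y) \<noteq> 0"
  proof
    assume "(LINT y|lborel. gI p q \<sigma> y) = 0"
    then have "AE x in lborel. gI p q \<sigma> x = 0"
      using integral_nonneg_eq_0_iff_AE[OF I] nn by simp
    then obtain N where N: "{x\<in>space lborel. \<not> gI p q \<sigma> x = 0} \<subseteq> N" "emeasure lborel N = 0" "N \<in> sets lborel"
      by (rule AE_E)
    have "UNIV \<subseteq> N" proof (rule subsetI)
      fix x :: real
      have "gI p q \<sigma> x \<noteq> 0" using gI_pos[OF p, of q \<sigma> x] by simp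
      then show "x \<in> N" using N(1) by auto
    qed
    then have "emeasure lborel (UNIV::real set) \<le> emeasure lborel N" using N(3) by (intro emeasure_mono) auto
    then show False using N(2) by simp
  qed
  then show ?thesis using ge by simp
qed



lemma fp_nonneg: "p > 0 \<Longrightarrow> fp p y \<ge> 0"
proof -
  assume p: "p > 0"
  have "fp p y = KK p * exp (- (\<bar>y\<bar> powr p) / p)" unfolding fp_def KK_def by simp
  then show ?thesis using KK_pos[OF p] by simp
qed

lemma Dp_convex: "convex (Dp p)"
proof -
  have "Dp p = {x. inner (0::real, 1::real) x < 1/p}" unfolding Dp_def by (auto simp: inner_prod_def)
  then show ?thesis using convex_halfspace_lt by metis
qed

lemma Lambda_convex:
  assumes q: "0 < q" "q < p" and s: "snd \<sigma> < 1/p" "snd \<rho> < 1/p" and t: "0 \<le> t" "t \<le> 1"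
  shows "Lambda p q ((1-t) * fst \<sigma> + t * fst \<rho>, (1-t) * snd \<sigma> + t * snd \<rho>)
           \<le> (1-t) * Lambda p q \<sigma> + t * Lambda p q \<rho>"
proof -
  have p: "p > 0" using q by simp
  define m where "m = ((1-t) * fst \<sigma> + t * fst \<rho>, (1-t) * snd \<sigma> + t * snd \<rho>)"
  have sm: "snd m < 1/p"
  proof -
    have "(1-t) * snd \<sigma> \<le> (1-t) * (1/p)" using s t by (intro mult_left_mono) auto
    moreover have "t * snd \<rho> \<le> t * (1/p)" using s t by (intro mult_left_mono) auto
    moreover have "(1-t) * snd \<sigma> < (1-t) * (1/p) \<or> t * snd \<rho> < t * (1/p)"
    proof (cases "t = 1")
      case True then show ?thesis using s by simp
    next
      case False then have "1 - t > 0" using t by simp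
      then show ?thesis using s mult_strict_left_mono[of "snd \<sigma>" "1/p" "1-t"] by simp
    qed
    moreover have "(1-t)*(1/p) + t*(1/p) = ((1-t)+t)*(1/p)" by (rule distrib_right[symmetric])
    then have "(1-t)*(1/p) + t*(1/p) = 1/p" by simp
    moreover have "snd m = (1-t) * snd \<sigma> + t * snd \<rho>" by (simp add: m_def)
    ultimately show ?thesis by linarith
  qed
  define A where "A = (LINT y|lborel. gI p q \<sigma> y)"
  define B where "B = (LINT y|lborel. gI p q \<rho> y)"
  have A: "A > 0" unfolding A_def by (rule gI_integral_pos[OF q s(1)])
  have B: "B > 0" unfolding B_def by (rule gI_integral_pos[OF q s(2)])
  define E where "E = exp ((1-t) * ln A + t * ln B)"
  have Epos: "E > 0" unfolding E_def by simp
  have pw: "gI p q m y \<le> E * ((1-t)/A * gI p q \<sigma> y + t/B * gI p q \<rho> y)" for y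
  proof -
    define u where "u = fst \<sigma> * \<bar>y\<bar> powr q + snd \<sigma> * \<bar>y\<bar> powr p"
    define v where "v = fst \<rho> * \<bar>y\<bar> powr q + snd \<rho> * \<bar>y\<bar> powr p"
    have gm: "gI p q m y = exp ((1-t) * u + t * v) * fp p y"
      unfolding gI_def m_def u_def v_def by (simp add: algebra_simps)
    have cv: "exp ((1 - t) * (u - ln A) + t * (v - ln B)) \<le> (1-t) * exp (u - ln A) + t * exp (v - ln B)"
      using convex_onD[OF exp_convex, of t "u - ln A" "v - ln B"] t by simp
    have "exp ((1-t) * u + t * v) = E * exp ((1 - t) * (u - ln A) + t * (v - ln B))"
      unfolding E_def by (simp add: exp_add[symmetric] algebra_simps)
    also have "\<dots> \<le> E * ((1-t) * exp (u - ln A) + t * exp (v - ln B))"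
      using cv Epos by (intro mult_left_mono) auto
    also have "\<dots> = E * ((1-t)/A * exp u + t/B * exp v)"
      using A B by (simp add: exp_diff)
    finally have "exp ((1-t) * u + t * v) * fp p y \<le> E * ((1-t)/A * exp u + t/B * exp v) * fp p y"
      by (intro mult_right_mono) (use fp_nonneg[OF p] in auto)
    then show ?thesis by (subst gm) (simp add: gI_def u_def v_def algebra_simps)
  qed
  have Isg: "integrable lborel (gI p q \<sigma>)" by (rule gI_integrable[OF q s(1)])
  have Irh: "integrable lborel (gI p q \<rho>)" by (rule gI_integrable[OF q s(2)])
  have Im: "integrable lborel (gI p q m)" by (rule gI_integrable[OF q sm])
  have "(LINT y|lborel. gI p q m y) \<le> (LINT y|lborel. E * ((1-t)/A * gI p q \<sigma> y + t/B * gI p q \<rho> y))"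
    by (rule integral_mono[OF Im _ pw]) (use Isg Irh in simp)
  also have "\<dots> = E * ((1-t)/A * A + t/B * B)"
    using Isg Irh unfolding A_def B_def by simp
  also have "\<dots> = E" using A B by simp
  finally have le: "(LINT y|lborel. gI p q m y) \<le> E" .
  have mpos: "(LINT y|lborel. gI p q m y) > 0" by (rule gI_integral_pos[OF q sm])
  have "Lambda p q m \<le> ln E" unfolding Lambda_gI using le mpos by simp
  also have "ln E = (1-t) * Lambda p q \<sigma> + t * Lambda p q \<rho>"
    unfolding E_def Lambda_gI A_def B_def by simp
  finally show ?thesis unfolding m_def .
qed

lemma Lambda_scale:
  assumes q: "0 < q" "q < p" and s: "snd \<sigma> < 1/p" and c: "c > 0"
  shows "Lambda p q (fst \<sigma> * c powr q, 1/p - (1/p - snd \<sigma>) * c powr p) = Lambda p q \<sigma> - ln c"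
proof -
  define \<sigma>c where "\<sigma>c = (fst \<sigma> * c powr q, 1/p - (1/p - snd \<sigma>) * c powr p)"
  have eq: "gI p q \<sigma> (c * x) = gI p q \<sigma>c x" for x
  proof -
    have "\<bar>c * x\<bar> powr q = c powr q * \<bar>x\<bar> powr q" "\<bar>c * x\<bar> powr p = c powr p * \<bar>x\<bar> powr p"
      using c by (simp_all add: abs_mult powr_mult)
    then show ?thesis unfolding gI_eq \<sigma>c_def by (simp add: algebra_simps)
  qed
  have "(LINT y|lborel. gI p q \<sigma> y) = c * (LINT y|lborel. gI p q \<sigma>c y)"
    using lborel_integral_real_affine[of c "gI p q \<sigma>" 0] c by (simp add: eq)
  moreover have "(LINT y|lborel. gI p q \<sigma> y) > 0" by (rule gI_integral_pos[OF q s])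
  ultimately have "(LINT y|lborel. gI p q \<sigma>c y) > 0" and
    "ln (LINT y|lborel. gI p q \<sigma> y) = ln c + ln (LINT y|lborel. gI p q \<sigma>c y)"
    using c by (auto simp: ln_mult zero_less_mult_iff)
  then show ?thesis unfolding Lambda_gI \<sigma>c_def[symmetric] by simp
qed



lemma gradient_ineq:
  assumes q: "0 < q" "q < p" and \<tau>: "snd \<tau> < 1/p" and \<sigma>: "snd \<sigma> < 1/p"
    and D: "(Lambda p q has_derivative (\<lambda>h. x1 * fst h + x2 * snd h)) (at \<tau>)"
  shows "Lambda p q \<sigma> - Lambda p q \<tau> \<ge> x1 * (fst \<sigma> - fst \<tau>) + x2 * (snd \<sigma> - snd \<tau>)"
proof -
  define d1 where "d1 = fst \<sigma> - fst \<tau>"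
  define d2 where "d2 = snd \<sigma> - snd \<tau>"
  define l where "l = (\<lambda>s::real. (fst \<tau> + s * d1, snd \<tau> + s * d2))"
  define \<phi> where "\<phi> = (\<lambda>s. Lambda p q (l s))"
  define A where "A = {s::real. snd \<tau> + s * d2 < 1/p}"
  have A_eq: "A = {s. inner d2 s < 1/p - snd \<tau>}" unfolding A_def by (auto simp: algebra_simps)
  have convA: "convex A" unfolding A_eq by (rule convex_halfspace_lt)
  have openA: "open A" unfolding A_eq by (rule open_halfspace_lt)
  have A0: "0 \<in> A" using \<tau> unfolding A_def by simp
  have A1: "1 \<in> A" using \<sigma> unfolding A_def d2_def by simp
  have cvx: "convex_on A \<phi>"
  proof (rule convex_onI[OF _ convA])
    fix t x y :: real assume t: "0 < t" "t < 1" and xy: "x \<in> A" "y \<in> A"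
    have "\<phi> ((1 - t) *\<^sub>R x + t *\<^sub>R y) = Lambda p q ((1-t) * fst (l x) + t * fst (l y), (1-t) * snd (l x) + t * snd (l y))"
      unfolding \<phi>_def l_def by (simp add: algebra_simps)
    also have "\<dots> \<le> (1-t) * Lambda p q (l x) + t * Lambda p q (l y)"
      by (rule Lambda_convex[OF q]) (use xy t in \<open>auto simp: A_def l_def\<close>)
    finally show "\<phi> ((1 - t) *\<^sub>R x + t *\<^sub>R y) \<le> (1 - t) * \<phi> x + t * \<phi> y" unfolding \<phi>_def .
  qed
  have l0: "l 0 = \<tau>" unfolding l_def by simp
  have dl: "(l has_derivative (\<lambda>h. (h * d1, h * d2))) (at 0)"
    unfolding l_def by (auto intro!: derivative_eq_intros)
  have D': "(Lambda p q has_derivative (\<lambda>h. x1 * fst h + x2 * snd h)) (at (l 0))"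
    using D l0 by simp
  have "(\<phi> has_derivative (\<lambda>h. x1 * fst (h * d1, h * d2) + x2 * snd (h * d1, h * d2))) (at 0)"
    unfolding \<phi>_def by (rule has_derivative_compose[OF dl D'])
  then have "(\<phi> has_derivative (\<lambda>h. (x1 * d1 + x2 * d2) * h)) (at 0)"
    by (rule has_derivative_eq_rhs) (auto simp: algebra_simps)
  then have "(\<phi> has_field_derivative (x1 * d1 + x2 * d2)) (at 0 within A)"
    unfolding has_field_derivative_def by (rule has_derivative_at_withinI)
  moreover have "0 \<in> interior A" using openA A0 by (simp add: interior_open)
  ultimately have "\<phi> 1 - \<phi> 0 \<ge> (x1 * d1 + x2 * d2) * (1 - 0)"
    by (intro convex_on_imp_above_tangent[OF cvx convex_connected[OF convA] _ A1])
  moreover have "\<phi> 1 = Lambda p q \<sigma>" unfolding \<phi>_def l_def d1_def d2_def by simp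
  moreover have "\<phi> 0 = Lambda p q \<tau>" unfolding \<phi>_def using l0 by simp
  ultimately show ?thesis unfolding d1_def d2_def by simp
qed

lemma mom_integrable:
  assumes q: "0 < q" "q < p"
  shows "integrable lborel (\<lambda>y. \<bar>y\<bar> powr q * fp p y)" "integrable lborel (\<lambda>y. \<bar>y\<bar> powr p * fp p y)"
proof -
  have p: "p > 0" using q by simp
  have f0: "fp p y \<ge> 0" for y by (rule fp_nonneg[OF p])
  have I1: "integrable lborel (gI p q (1, 0))" by (rule gI_integrable[OF q]) (use p in simp)
  have "AE y in lborel. norm (\<bar>y\<bar> powr q * fp p y) \<le> norm (gI p q (1, 0) y)"
  proof (rule AE_I2)
    fix y :: real
    have "\<bar>y\<bar> powr q \<le> exp (\<bar>y\<bar> powr q)" using exp_ge_add_one_self[of "\<bar>y\<bar> powr q"] by linarith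
    then have "\<bar>y\<bar> powr q * fp p y \<le> exp (\<bar>y\<bar> powr q) * fp p y" using f0 by (intro mult_right_mono) auto
    then show "norm (\<bar>y\<bar> powr q * fp p y) \<le> norm (gI p q (1, 0) y)" using f0 by (simp add: gI_def)
  qed
  then show "integrable lborel (\<lambda>y. \<bar>y\<bar> powr q * fp p y)"
    by (intro Bochner_Integration.integrable_bound[OF I1]) (auto simp: fp_def)
  have I2: "integrable lborel (\<lambda>y. (2*p) * gI p q (0, 1/(2*p)) y)" proof -
    have "1/(2*p) < 1/p" using p by (simp add: field_simps)
    then show ?thesis using gI_integrable[OF q, of "(0, 1/(2*p))"] by simp
  qed
  have "AE y in lborel. norm (\<bar>y\<bar> powr p * fp p y) \<le> norm ((2*p) * gI p q (0, 1/(2*p)) y)"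
  proof (rule AE_I2)
    fix y :: real
    have "\<bar>y\<bar> powr p / (2*p) \<le> exp (\<bar>y\<bar> powr p / (2*p))" using exp_ge_add_one_self[of "\<bar>y\<bar> powr p / (2*p)"] by linarith
    then have "\<bar>y\<bar> powr p \<le> (2*p) * exp (\<bar>y\<bar> powr p / (2*p))" using p by (simp add: field_simps)
    then have "\<bar>y\<bar> powr p * fp p y \<le> ((2*p) * exp (\<bar>y\<bar> powr p / (2*p))) * fp p y" using f0 by (intro mult_right_mono) auto
    then show "norm (\<bar>y\<bar> powr p * fp p y) \<le> norm ((2*p) * gI p q (0, 1/(2*p)) y)" using f0 p by (simp add: gI_def mult.assoc)
  qed
  then show "integrable lborel (\<lambda>y. \<bar>y\<bar> powr p * fp p y)"
    by (intro Bochner_Integration.integrable_bound[OF I2]) (auto simp: fp_def)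
qed

lemma jensen:
  assumes q: "0 < q" "q < p" and s: "snd \<sigma> < 1/p"
  shows "Lambda p q \<sigma> \<ge> fst \<sigma> * (LINT y|lborel. \<bar>y\<bar> powr q * fp p y) + snd \<sigma> * (LINT y|lborel. \<bar>y\<bar> powr p * fp p y)"
proof -
  have p: "p > 0" using q by simp
  have f0: "fp p y \<ge> 0" for y by (rule fp_nonneg[OF p])
  define Q where "Q = (LINT y|lborel. \<bar>y\<bar> powr q * fp p y)"
  define P where "P = (LINT y|lborel. \<bar>y\<bar> powr p * fp p y)"
  define K where "K = fst \<sigma> * Q + snd \<sigma> * P"
  define h where "h = (\<lambda>y. exp K * ((1 - K) * fp p y + fst \<sigma> * (\<bar>y\<bar> powr q * fp p y) + snd \<sigma> * (\<bar>y\<bar> powr p * fp p y)))"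
  note M = mom_integrable[OF q]
  note F = fp_normalized[OF p]
  have hI: "integrable lborel h" unfolding h_def using M F by simp
  have hint: "(LINT y|lborel. h y) = exp K"
  proof -
    have "(LINT y|lborel. h y) = exp K * ((1 - K) * 1 + fst \<sigma> * Q + snd \<sigma> * P)"
      unfolding h_def Q_def P_def using M F by simp
    then show ?thesis unfolding K_def by simp
  qed
  have pw: "h y \<le> gI p q \<sigma> y" for y
  proof -
    define u where "u = fst \<sigma> * \<bar>y\<bar> powr q + snd \<sigma> * \<bar>y\<bar> powr p"
    have "exp K * (1 + (u - K)) \<le> exp K * exp (u - K)"
      using exp_ge_add_one_self[of "u - K"] by (intro mult_left_mono) auto
    also have "\<dots> = exp u" by (simp add: exp_diff)
    finally have "exp K * (1 + (u - K)) * fp p y \<le> exp u * fp p y" using f0 by (intro mult_right_mono) auto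
    moreover have "h y = exp K * (1 + (u - K)) * fp p y" unfolding h_def u_def by (simp add: algebra_simps)
    ultimately show ?thesis unfolding gI_def u_def by simp
  qed
  have "exp K \<le> (LINT y|lborel. gI p q \<sigma> y)"
    unfolding hint[symmetric] by (rule integral_mono[OF hI gI_integrable[OF q s] pw])
  then have "ln (exp K) \<le> Lambda p q \<sigma>" unfolding Lambda_gI using gI_integral_pos[OF q s] by (subst ln_le_cancel_iff) auto
  then show ?thesis unfolding K_def Q_def P_def by simp
qed

lemma Lambda_zero: assumes "p > 0" shows "Lambda p q (0, 0) = 0"
  unfolding Lambda_gI gI_def using fp_normalized(2)[OF assms] by simp

lemma pmoment:
  assumes q: "0 < q" "q < p"
  shows "(LINT y|lborel. \<bar>y\<bar> powr p * fp p y) = 1"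
proof -
  have p: "p > 0" using q by simp
  define P where "P = (LINT y|lborel. \<bar>y\<bar> powr p * fp p y)"
  define f where "f = (\<lambda>s::real. - (1/p) * ln (1 - p * s) - s * P)"
  have key: "f 0 \<le> f s" if s: "\<bar>0 - s\<bar> < 1/p" for s
  proof -
    have s1: "s < 1/p" using s by simp
    have ps: "1 - p * s > 0" using s1 p by (simp add: field_simps)
    define c where "c = (1 - p * s) powr (1/p)"
    have c: "c > 0" unfolding c_def using ps by simp
    have cp: "c powr p = 1 - p * s" unfolding c_def using ps p by (simp add: powr_powr)
    have "Lambda p q (fst (0::real,0::real) * c powr q, 1/p - (1/p - snd (0::real,0::real)) * c powr p) = Lambda p q (0,0) - ln c"
      by (rule Lambda_scale[OF q _ c]) (use p in simp)
    moreover have "1/p - (1/p - 0) * c powr p = s" unfolding cp using p by (simp add: field_simps)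
    ultimately have L: "Lambda p q (0, s) = - ln c" using Lambda_zero[OF p] by simp
    have lc: "ln c = (1/p) * ln (1 - p * s)" unfolding c_def using ps by (simp add: ln_powr)
    have "Lambda p q (0, s) \<ge> s * P" using jensen[OF q, of "(0, s)"] s1 unfolding P_def by simp
    then show ?thesis unfolding f_def using L lc by simp
  qed
  have "DERIV f 0 :> (- (1/p) * (- p / (1 - p * 0)) - P)"
    unfolding f_def by (auto intro!: derivative_eq_intros)
  then have "(- (1/p) * (- p / (1 - p * 0)) - P) = 0"
    by (rule DERIV_local_min[where d="1/p"]) (use key p in auto)
  then show ?thesis unfolding P_def[symmetric] using p by simp
qed



lemma ln_strict: fixes x :: real assumes x: "0 < x" "x \<noteq> 1" shows "ln x < x - 1"
proof -
  define r where "r = sqrt x"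
  have r0: "r > 0" unfolding r_def using x by simp
  have rr: "r * r = x" unfolding r_def using x by simp
  have r1: "r \<noteq> 1" using rr x by auto
  have "ln x = ln r + ln r" unfolding rr[symmetric] using r0 by (simp add: ln_mult)
  also have "\<dots> \<le> 2 * (r - 1)" using ln_le_minus_one[OF r0] by simp
  also have "\<dots> < x - 1"
  proof -
    have "r - 1 \<noteq> 0" using r1 by simp
    then have "(r - 1) * (r - 1) > 0" by (metis not_real_square_gt_zero)
    then show ?thesis unfolding rr[symmetric] by (simp add: algebra_simps)
  qed
  finally show ?thesis .
qed

lemma ereal_H1: "ereal W \<le> x \<Longrightarrow> ereal (W - r) \<le> x - ereal r"
  by (cases x) auto

lemma ereal_H2: "ereal V \<le> x - ereal r \<Longrightarrow> ereal (V + r) \<le> x"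
  by (cases x) auto

theorem lemma2p6:
  fixes p q z :: real
  assumes "1 \<le> q" and "q < p"
    and "z > mpq p q"
    and "(z powr q, 1) \<in> Jp p q"
  shows "(INF zz\<in>{(z1, z2). z1 > 0 \<and> 0 < z2 \<and> z2 \<le> 1 \<and> z1 * z2 = z}.
            (INF tt\<in>{(t1, t2). t1 > 0 \<and> t2 > 0 \<and> t1 powr (1/q) * t2 powr (-1/p) = fst zz}.
               Lambda_star p q tt) - ereal (ln (snd zz)))
         = (INF t\<in>{(t1, t2, t3). t1 > 0 \<and> t2 > 0 \<and> 0 < t3 \<and> t3 \<le> 1 \<and>
                     t1 powr (1/q) * t2 powr (-1/p) * t3 = z}. IS p q t)
     \<and> (INF t\<in>{(t1, t2, t3). t1 > 0 \<and> t2 > 0 \<and> 0 < t3 \<and> t3 \<le> 1 \<and>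
                     t1 powr (1/q) * t2 powr (-1/p) * t3 = z}. IS p q t)
         = IS p q (z powr q, 1, 1)
     \<and> IS p q (z powr q, 1, 1) = Lambda_star p q (z powr q, 1)
     \<and> (\<forall>t\<in>{(t1, t2, t3). t1 > 0 \<and> t2 > 0 \<and> 0 < t3 \<and> t3 \<le> 1 \<and>
                     t1 powr (1/q) * t2 powr (-1/p) * t3 = z}.
          IS p q t = IS p q (z powr q, 1, 1) \<longleftrightarrow> t = (z powr q, 1, 1))"
proof -
  have q: "0 < q" "q < p" using assms(1,2) by auto
  have p: "p > 0" using q by simp
  define Z where "Z = z powr q"
  obtain \<tau> where \<tau>D: "\<tau> \<in> Dp p" and D: "(Lambda p q has_derivative (\<lambda>h. Z * fst h + 1 * snd h)) (at \<tau>)"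
    using assms(4) unfolding Jp_def Z_def by auto
  define a where "a = fst \<tau>"
  define b where "b = snd \<tau>"
  have bp: "b < 1/p" using \<tau>D unfolding Dp_def b_def by simp
  define Q where "Q = (LINT y|lborel. \<bar>y\<bar> powr q * fp p y)"
  have Q0: "Q \<ge> 0" unfolding Q_def using fp_nonneg[OF p] by (intro integral_nonneg_AE) auto
  have mpq: "mpq p q = Q powr (1/q)" unfolding mpq_def Q_def ..
  have z0: "z > 0" using assms(3) unfolding mpq by (rule le_less_trans[rotated]) simp
  have QZ: "Q < Z"
  proof (cases "Q = 0")
    case True then show ?thesis unfolding Z_def using z0 by simp
  next
    case False
    then have "(Q powr (1/q)) powr q < z powr q" using assms(3) q Q0 unfolding mpq
      by (intro powr_less_mono2) auto
    then show ?thesis unfolding Z_def using q Q0 by (simp add: powr_powr)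
  qed
  have GI: "Lambda p q \<sigma> - Lambda p q \<tau> \<ge> Z * (fst \<sigma> - a) + 1 * (snd \<sigma> - b)" if "snd \<sigma> < 1/p" for \<sigma>
    unfolding a_def b_def by (rule gradient_ineq[OF q _ that D]) (use bp b_def in simp)
  have a0: "a \<ge> 0"
  proof -
    have "Lambda p q (0,0) - Lambda p q \<tau> \<ge> Z * (0 - a) + 1 * (0 - b)" using GI[of "(0,0)"] p by simp
    moreover have "Lambda p q \<tau> \<ge> a * Q + b * 1"
      using jensen[OF q, of \<tau>] bp pmoment[OF q] unfolding a_def b_def Q_def by simp
    ultimately have "a * (Q - Z) \<le> 0" using Lambda_zero[OF p] by (simp add: algebra_simps)
    moreover have "a < 0 \<Longrightarrow> a * (Q - Z) > 0" using QZ by (intro mult_neg_neg) auto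
    ultimately show ?thesis by linarith
  qed
  have Z0: "Z > 0" unfolding Z_def using z0 by simp
  define V where "V = a * Z + b - Lambda p q \<tau>"
  have LsZ: "Lambda_star p q (Z, 1) = ereal V"
  proof (rule antisym)
    show "Lambda_star p q (Z, 1) \<le> ereal V"
      unfolding Lambda_star_def
    proof (rule SUP_least)
      fix \<sigma> assume "\<sigma> \<in> Dp p"
      then have "snd \<sigma> < 1/p" unfolding Dp_def by simp
      from GI[OF this] show "ereal (fst (Z, 1) * fst \<sigma> + snd (Z, 1) * snd \<sigma> - Lambda p q \<sigma>) \<le> ereal V"
        unfolding V_def by (simp add: algebra_simps)
    qed
    show "ereal V \<le> Lambda_star p q (Z, 1)"
      unfolding Lambda_star_def V_def
      by (rule SUP_upper2[OF \<tau>D]) (simp add: a_def b_def mult.commute)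
  qed
  have LB: "Lambda_star p q (t1, t2) \<ge> ereal (a * t1 * t2 powr (-q/p) + t2/p - 1/p + b - Lambda p q \<tau> - (1/p) * ln t2)"
    if t: "t1 > 0" "t2 > 0" for t1 t2
  proof -
    define c where "c = t2 powr (-1/p)"
    have c: "c > 0" unfolding c_def using t by simp
    define \<sigma> where "\<sigma> = (fst \<tau> * c powr q, 1/p - (1/p - snd \<tau>) * c powr p)"
    have cq: "c powr q = t2 powr (-q/p)" unfolding c_def using t by (simp add: powr_powr)
    have cp: "c powr p = 1 / t2"
    proof -
      have "c powr p = t2 powr (-1/p * p)" unfolding c_def by (rule powr_powr)
      also have "-1/p * p = -1" using p by simp
      finally show ?thesis using t by (simp add: powr_minus divide_inverse)
    qed
    have lc: "ln c = - (1/p) * ln t2" unfolding c_def using t by simp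
    have sD: "\<sigma> \<in> Dp p"
    proof -
      have "(1/p - snd \<tau>) * c powr p > 0" using bp c unfolding b_def by simp
      then show ?thesis unfolding Dp_def \<sigma>_def by simp
    qed
    have Ls: "Lambda p q \<sigma> = Lambda p q \<tau> - ln c"
      unfolding \<sigma>_def by (rule Lambda_scale[OF q _ c]) (use bp b_def in simp)
    have "ereal (fst (t1, t2) * fst \<sigma> + snd (t1, t2) * snd \<sigma> - Lambda p q \<sigma>) \<le> Lambda_star p q (t1, t2)"
      unfolding Lambda_star_def by (rule SUP_upper[OF sD])
    moreover have "fst (t1, t2) * fst \<sigma> + snd (t1, t2) * snd \<sigma> - Lambda p q \<sigma>
        = a * t1 * t2 powr (-q/p) + t2/p - 1/p + b - Lambda p q \<tau> - (1/p) * ln t2"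
      unfolding Ls using t by (simp add: \<sigma>_def cq cp lc a_def b_def field_simps)
    ultimately show ?thesis by simp
  qed
  have core: "IS p q (t1, t2, t3) \<ge> ereal V \<and> (IS p q (t1, t2, t3) = ereal V \<longrightarrow> (t1, t2, t3) = (Z, 1, 1))"
    if t: "t1 > 0" "t2 > 0" "0 < t3" "t3 \<le> 1" "t1 powr (1/q) * t2 powr (-1/p) * t3 = z" for t1 t2 t3
  proof -
    have w: "t1 powr (1/q) * t2 powr (-1/p) = z / t3" using t by (simp add: field_simps)
    have "(t1 powr (1/q) * t2 powr (-1/p)) powr q = t1 * t2 powr (-q/p)"
      using t q by (simp add: powr_mult powr_powr)
    moreover have "(z / t3) powr q = Z / t3 powr q" unfolding Z_def using z0 t by (simp add: powr_divide)
    ultimately have W: "t1 * t2 powr (-q/p) = Z / t3 powr q" using w by simp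
    define W where "W = a * Z / t3 powr q + t2/p - 1/p + b - Lambda p q \<tau> - (1/p) * ln t2"
    have LBt: "Lambda_star p q (t1, t2) \<ge> ereal W"
      using LB[OF t(1,2)] W unfolding W_def by (simp add: mult.assoc)
    have IS: "IS p q (t1, t2, t3) = Lambda_star p q (t1, t2) - ereal (ln t3)" unfolding IS_def by simp
    have t3q: "t3 powr q \<le> 1" "t3 powr q > 0" using t q by (auto intro: powr_le1)
    have e1: "a * Z / t3 powr q \<ge> a * Z"
    proof -
      have "a * Z \<ge> 0" using a0 Z0 by simp
      then have "a * Z * 1 \<le> a * Z * (1 / t3 powr q)" using t3q by (intro mult_left_mono) auto
      then show ?thesis by simp
    qed
    have e2: "t2 - 1 - ln t2 \<ge> 0" using ln_le_minus_one[OF t(2)] by simp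
    have e3: "- ln t3 \<ge> 0" using t by simp
    have e2': "(t2 - 1 - ln t2) / p \<ge> 0" using e2 p by simp
    have WV: "W - ln t3 = V + (a * Z / t3 powr q - a * Z) + (t2 - 1 - ln t2) / p - ln t3"
      unfolding W_def V_def using p by (simp add: field_simps)
    have ge: "W - ln t3 \<ge> V" unfolding WV using e1 e2' e3 by linarith
    have strict: "W - ln t3 > V" if "(t1, t2, t3) \<noteq> (Z, 1, 1)"
    proof (cases "t2 = 1 \<and> t3 = 1")
      case True
      then have "t1 powr (1/q) = z" using t by simp
      then have "(t1 powr (1/q)) powr q = Z" unfolding Z_def by simp
      then have "t1 = Z" using t q by (simp add: powr_powr)
      then show ?thesis using True that by simp
    next
      case False
      then have "t2 \<noteq> 1 \<or> t3 \<noteq> 1" by simp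
      then have "(t2 - 1 - ln t2) / p > 0 \<or> - ln t3 > 0"
      proof
        assume "t2 \<noteq> 1"
        then have "t2 - 1 - ln t2 > 0" using ln_strict[OF t(2)] by simp
        then show ?thesis using p by simp
      next
        assume "t3 \<noteq> 1"
        then have "t3 < 1" using t by simp
        then show ?thesis using t by simp
      qed
      then show ?thesis unfolding WV using e1 e2' e3 by linarith
    qed
    have geIS: "IS p q (t1, t2, t3) \<ge> ereal (W - ln t3)" unfolding IS by (rule ereal_H1[OF LBt])
    show ?thesis
    proof
      have "ereal V \<le> ereal (W - ln t3)" using ge by simp
      then show "IS p q (t1, t2, t3) \<ge> ereal V" using geIS by (rule order_trans)
      show "IS p q (t1, t2, t3) = ereal V \<longrightarrow> (t1, t2, t3) = (Z, 1, 1)"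
      proof (rule impI, rule ccontr)
        assume eq: "IS p q (t1, t2, t3) = ereal V" and ne: "(t1, t2, t3) \<noteq> (Z, 1, 1)"
        have "ereal V < ereal (W - ln t3)" using strict[OF ne] by simp
        then show False using geIS eq by simp
      qed
    qed
  qed
  define S where "S = {(t1, t2, t3). t1 > 0 \<and> t2 > 0 \<and> 0 < t3 \<and> t3 \<le> 1 \<and>
                     t1 powr (1/q) * t2 powr (-1/p) * t3 = z}"
  have zS: "(Z, 1, 1) \<in> S" unfolding S_def Z_def using z0 q by (simp add: powr_powr)
  have ISz: "IS p q (Z, 1, 1) = ereal V" unfolding IS_def using LsZ by simp
  have coreS: "IS p q t \<ge> ereal V \<and> (IS p q t = ereal V \<longrightarrow> t = (Z, 1, 1))" if "t \<in> S" for t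
    using that core unfolding S_def by auto
  have INFS: "(INF t\<in>S. IS p q t) = ereal V"
  proof (rule antisym)
    show "(INF t\<in>S. IS p q t) \<le> ereal V" using INF_lower[OF zS, of "IS p q"] ISz by simp
    show "ereal V \<le> (INF t\<in>S. IS p q t)" using coreS by (intro INF_greatest) blast
  qed
  have part1: "(INF zz\<in>{(z1, z2). z1 > 0 \<and> 0 < z2 \<and> z2 \<le> 1 \<and> z1 * z2 = z}.
            (INF tt\<in>{(t1, t2). t1 > 0 \<and> t2 > 0 \<and> t1 powr (1/q) * t2 powr (-1/p) = fst zz}.
               Lambda_star p q tt) - ereal (ln (snd zz))) = ereal V"
  proof (rule antisym)
    have zz: "(z, 1) \<in> {(z1, z2). z1 > 0 \<and> 0 < z2 \<and> z2 \<le> (1::real) \<and> z1 * z2 = z}" using z0 by simp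
    have tt: "(Z, 1) \<in> {(t1, t2). t1 > 0 \<and> t2 > 0 \<and> t1 powr (1/q) * t2 powr (-1/p) = fst (z, 1::real)}"
      using z0 q Z0 unfolding Z_def by (simp add: powr_powr)
    have "(INF tt\<in>{(t1, t2). t1 > 0 \<and> t2 > 0 \<and> t1 powr (1/q) * t2 powr (-1/p) = fst (z, 1::real)}.
               Lambda_star p q tt) \<le> Lambda_star p q (Z, 1)"
      by (rule INF_lower[OF tt])
    then have "(INF tt\<in>{(t1, t2). t1 > 0 \<and> t2 > 0 \<and> t1 powr (1/q) * t2 powr (-1/p) = fst (z, 1::real)}.
               Lambda_star p q tt) - ereal (ln (snd (z, 1::real))) \<le> ereal V"
      using LsZ by simp
    then show "(INF zz\<in>{(z1, z2). z1 > 0 \<and> 0 < z2 \<and> z2 \<le> 1 \<and> z1 * z2 = z}.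
            (INF tt\<in>{(t1, t2). t1 > 0 \<and> t2 > 0 \<and> t1 powr (1/q) * t2 powr (-1/p) = fst zz}.
               Lambda_star p q tt) - ereal (ln (snd zz))) \<le> ereal V"
      by (rule INF_lower2[OF zz])
    show "ereal V \<le> (INF zz\<in>{(z1, z2). z1 > 0 \<and> 0 < z2 \<and> z2 \<le> 1 \<and> z1 * z2 = z}.
            (INF tt\<in>{(t1, t2). t1 > 0 \<and> t2 > 0 \<and> t1 powr (1/q) * t2 powr (-1/p) = fst zz}.
               Lambda_star p q tt) - ereal (ln (snd zz)))"
    proof (rule INF_greatest)
      fix zz assume "zz \<in> {(z1, z2). z1 > 0 \<and> 0 < z2 \<and> z2 \<le> (1::real) \<and> z1 * z2 = z}"
      then obtain z1 z2 where zz: "zz = (z1, z2)" "z1 > 0" "0 < z2" "z2 \<le> 1" "z1 * z2 = z" by auto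
      have "ereal (V + ln z2) \<le> (INF tt\<in>{(t1, t2). t1 > 0 \<and> t2 > 0 \<and> t1 powr (1/q) * t2 powr (-1/p) = z1}.
               Lambda_star p q tt)"
      proof (rule INF_greatest)
        fix tt assume "tt \<in> {(t1, t2). t1 > 0 \<and> t2 > 0 \<and> t1 powr (1/q) * t2 powr (-1/p) = z1}"
        then obtain t1 t2 where tt: "tt = (t1, t2)" "t1 > 0" "t2 > 0" "t1 powr (1/q) * t2 powr (-1/p) = z1" by auto
        have "IS p q (t1, t2, z2) \<ge> ereal V" using core[of t1 t2 z2] tt zz by simp
        then have "ereal V \<le> Lambda_star p q (t1, t2) - ereal (ln z2)" unfolding IS_def by simp
        then show "ereal (V + ln z2) \<le> Lambda_star p q tt" unfolding tt by (rule ereal_H2)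
      qed
      then have "ereal (V + ln z2 - ln z2) \<le> (INF tt\<in>{(t1, t2). t1 > 0 \<and> t2 > 0 \<and> t1 powr (1/q) * t2 powr (-1/p) = z1}.
               Lambda_star p q tt) - ereal (ln z2)" by (rule ereal_H1)
      then show "ereal V \<le> (INF tt\<in>{(t1, t2). t1 > 0 \<and> t2 > 0 \<and> t1 powr (1/q) * t2 powr (-1/p) = fst zz}.
               Lambda_star p q tt) - ereal (ln (snd zz))" unfolding zz by simp
    qed
  qed
  show ?thesis
    unfolding S_def[symmetric] Z_def[symmetric]
    using part1 INFS ISz LsZ coreS by auto
qed


end
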